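(* There is an absolute constant $C$ such that for every odd prime $p$ and every integer $n\ge2$, if $X$ is uniform on $\{0,1\}^{n-1}$, then $$\mathbb{E}_X\big[q_p(|X|)\big]\le\tfrac12-\tfrac1\pi+\tfrac1{2p}+Cp^{3/2}e^{-n/p^2},$$ where for an integer $k$, $q_p(k)=\sin^2\!\big(-\tfrac\pi4+\tfrac{\pi}{p}k\big)$ if $(k\bmod p)<p/2$ and $q_p(k)=\cos^2\!\big(-\tfrac\pi4+\tfrac{\pi}{p}k\big)$ otherwise.
   Context: $|X|$ is the Hamming weight of $X$ and $k\bmod p\in\{0,\dots,p-1\}$. (Equivalently, $q_p(|x|)$ is the probability that a bit $Y_x$ with $\Pr[Y_x=\mathrm{parity}(x)]=\cos^2(-\pi/4+\pi|x|/p)$ differs from $\mathrm{majmod}_p(x)\oplus\mathrm{parity}(x)$.) *)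

theory Defs
  imports "HOL-Analysis.Analysis" "HOL-Library.FuncSet"
begin

definition q_p :: "nat \<Rightarrow> int \<Rightarrow> real" where
  "q_p p k = (if real_of_int (k mod int p) < real p / 2
              then (sin (- pi/4 + pi / real p * real_of_int k))\<^sup>2
              else (cos (- pi/4 + pi / real p * real_of_int k))\<^sup>2)"

definition hamming_weight :: "nat \<Rightarrow> (nat \<Rightarrow> nat) \<Rightarrow> nat" where
  "hamming_weight m x = card {i \<in> {0..<m}. x i = 1}"

definition cube :: "nat \<Rightarrow> (nat \<Rightarrow> nat) set" where
  "cube m = ({0..<m} \<rightarrow>\<^sub>E {0, 1})"

definition unif_cube_expectation :: "nat \<Rightarrow> ((nat \<Rightarrow> nat) \<Rightarrow> real) \<Rightarrow> real" where
  "unif_cube_expectation m f = (\<Sum>x\<in>cube m. f x) / real (card (cube m))"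

end

theory Submission
  imports Defs
begin



lemma sin_add_npi: "sin (x + real d * pi) = (-1)^d * sin x"
  by (simp add: sin_add)
lemma cos_add_npi: "cos (x + real d * pi) = (-1)^d * cos x"
  by (simp add: cos_add)

lemma m1sq: "((-1::real)^d)^2 = 1"
  by (simp add: power_mult[symmetric] mult.commute[of d])

lemma q_periodic:
  assumes "p > 0"
  shows "q_p p (int k) = q_p p (int (k mod p))"
proof -
  have m: "int k mod int p = int (k mod p)" by (simp add: zmod_int)
  have k: "real k = real (k mod p) + real (k div p) * real p"
    by (metis div_mult_mod_eq of_nat_add of_nat_mult add.commute)
  have e: "- pi/4 + pi / real p * real k = (- pi/4 + pi / real p * real (k mod p)) + real (k div p) * pi"
    using assms by (simp add: k field_simps)
  have s: "(sin (- pi/4 + pi / real p * real k))\<^sup>2 = (sin (- pi/4 + pi / real p * real (k mod p)))\<^sup>2"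
    unfolding e sin_add_npi by (simp add: power_mult_distrib m1sq)
  have c: "(cos (- pi/4 + pi / real p * real k))\<^sup>2 = (cos (- pi/4 + pi / real p * real (k mod p)))\<^sup>2"
    unfolding e cos_add_npi by (simp add: power_mult_distrib m1sq)
  have m2: "int (k mod p) mod int p = int (k mod p)" by (simp add: zmod_int)
  show ?thesis unfolding q_p_def m m2 of_int_of_nat_eq s c by (rule refl)
qed

lemma q_formula:
  assumes "r < p"
  shows "q_p p (int r) = (1 - \<bar>sin (2 * pi * real r / real p)\<bar>) / 2"
proof -
  have p: "real p > 0" using assms by simp
  define a where "a = 2 * pi * real r / real p"
  have a0: "0 \<le> a" and a2: "a < 2 * pi" using assms p by (auto simp: a_def field_simps)
  have m: "int r mod int p = int r" using assms by simp
  have dbl: "2 * (- pi/4 + pi / real p * real r) = a - pi/2" using p by (simp add: a_def field_simps)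
  have cs: "cos (a - pi/2) = sin a" by (simp add: cos_diff)
  have sin2: "(sin (- pi/4 + pi / real p * real r))\<^sup>2 = (1 - sin a) / 2"
    using cos_double_sin[of "- pi/4 + pi / real p * real r"] dbl cs by simp
  have cos2: "(cos (- pi/4 + pi / real p * real r))\<^sup>2 = (1 + sin a) / 2"
    using cos_double_cos[of "- pi/4 + pi / real p * real r"] dbl cs by simp
  show ?thesis
  proof (cases "real r < real p / 2")
    case True
    then have "a \<le> pi" using p by (simp add: a_def field_simps)
    then have "sin a \<ge> 0" using a0 sin_ge_zero by blast
    then show ?thesis unfolding q_p_def m using True sin2 by (simp add: a_def)
  next
    case False
    then have "a \<ge> pi" using p by (simp add: a_def field_simps)
    then have "sin (a - pi) \<ge> 0" using a2 sin_ge_zero[of "a - pi"] by simp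
    then have "sin a \<le> 0" by (simp add: sin_diff)
    then show ?thesis unfolding q_p_def m using False cos2 by (simp add: a_def)
  qed
qed

lemma q_bounds: "0 \<le> q_p p k" "q_p p k \<le> 1"
  unfolding q_p_def by (auto simp: abs_square_le_1)




lemma tele: "(\<Sum>k<N. 2 * sin (x/2) * sin (real k * x)) = cos (x/2) - cos ((real N - 1/2) * x)"
proof (induction N)
  case 0
  then show ?case by simp
next
  case (Suc N)
  have e: "2 * sin (x/2) * sin (real N * x) = cos ((real N - 1/2) * x) - cos ((real (Suc N) - 1/2) * x)"
  proof -
    have a: "(real N - 1/2) * x = real N * x - x/2" by (simp add: algebra_simps)
    have b: "(real (Suc N) - 1/2) * x = real N * x + x/2" by (simp add: algebra_simps)
    show ?thesis unfolding a b cos_diff cos_add by simp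
  qed
  show ?case using Suc e by simp
qed

lemma sum_sin_eq:
  assumes "p > 0"
  shows "(\<Sum>k<p. sin (pi * real k / real p)) * sin (pi / (2 * real p)) = cos (pi / (2 * real p))"
proof -
  have t: "(\<Sum>k<p. 2 * sin ((pi / real p)/2) * sin (real k * (pi / real p))) =
     cos ((pi / real p)/2) - cos ((real p - 1/2) * (pi / real p))" by (rule tele)
  have c: "(real p - 1/2) * (pi / real p) = pi - pi / (2 * real p)" using assms by (simp add: field_simps)
  have h: "(pi / real p)/2 = pi / (2 * real p)" by simp
  have "2 * ((\<Sum>k<p. sin (pi * real k / real p)) * sin (pi / (2 * real p))) = 2 * cos (pi / (2 * real p))"
    using t unfolding c h by (simp add: sum_distrib_left sum_distrib_right mult_ac cos_diff)
  then show ?thesis by simp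
qed




lemma cos_ge_1_minus: "(0::real) \<le> y \<Longrightarrow> y \<le> 2 \<Longrightarrow> 1 - y \<le> cos y"
proof -
  assume y: "0 \<le> y" "y \<le> 2"
  have c: "cos y = 1 - 2 * (sin (y/2))^2" using cos_double_sin[of "y/2"] by simp
  have a: "\<bar>sin (y/2)\<bar> \<le> y/2" using abs_sin_x_le_abs_x[of "y/2"] y by simp
  have "(sin (y/2))^2 = \<bar>sin (y/2)\<bar>^2" by simp
  also have "\<dots> \<le> (y/2)^2" using a by (intro power_mono) auto
  finally have b: "(sin (y/2))^2 \<le> (y/2)^2" .
  have d: "(y/2)^2 * 2 \<le> y" using y mult_left_mono[of y 2 y] by (simp add: power2_eq_square)
  show ?thesis using c b d by linarith
qed

lemma sum_sin_lower:
  assumes "p \<ge> 2"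
  shows "(\<Sum>k<p. sin (pi * real k / real p)) \<ge> 2 * real p / pi - 1"
proof -
  define y where "y = pi / (2 * real p)"
  define S where "S = (\<Sum>k<p. sin (pi * real k / real p))"
  have p: "real p \<ge> 2" using assms by simp
  have y0: "0 < y" using p by (simp add: y_def)
  have y1: "y < 1" using p pi_less_4 by (simp add: y_def field_simps)
  have sy: "sin y > 0" using y0 y1 pi_gt3 by (intro sin_gt_zero) auto
  have eq: "S * sin y = cos y" using sum_sin_eq[of p] assms by (simp add: S_def y_def)
  have "(1/y - 1) * sin y \<le> (1/y - 1) * y"
    using sin_x_le_x[of y] y0 y1 by (intro mult_left_mono) (auto simp: field_simps)
  also have "\<dots> = 1 - y" using y0 by (simp add: field_simps)
  also have "\<dots> \<le> cos y" using cos_ge_1_minus[of y] y0 y1 by simp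
  finally have "(1/y - 1) * sin y \<le> S * sin y" using eq by simp
  then have "1/y - 1 \<le> S" using sy by simp
  moreover have "1/y = 2 * real p / pi" by (simp add: y_def)
  ultimately show ?thesis by (simp add: S_def)
qed




lemma abs_sin_reindex:
  "\<bar>sin (2 * pi * real r / real p)\<bar> = sin (pi * real ((2 * r) mod p) / real p)"
proof (cases "p = 0")
  case True then show ?thesis by simp
next
  case False
  have k: "real (2 * r) = real ((2 * r) mod p) + real ((2 * r) div p) * real p"
    by (metis div_mult_mod_eq of_nat_add of_nat_mult add.commute)
  have e: "2 * pi * real r / real p = pi * real ((2 * r) mod p) / real p + real ((2 * r) div p) * pi"
    using False k by (simp add: field_simps)
  have nn: "sin (pi * real ((2 * r) mod p) / real p) \<ge> 0"
    using False by (intro sin_ge_zero) (auto simp: field_simps less_imp_le)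
  show ?thesis unfolding e sin_add_npi using nn by (simp add: abs_mult)
qed

lemma sum_abs_sin:
  assumes "prime p" "odd p"
  shows "(\<Sum>r<p. \<bar>sin (2 * pi * real r / real p)\<bar>) = (\<Sum>k<p. sin (pi * real k / real p))"
proof -
  have p0: "p > 0" using assms prime_gt_0_nat by blast
  have cop: "coprime 2 p" using assms by (simp add: coprime_commute)
  have inj: "inj_on (\<lambda>r. (2 * r) mod p) {..<p}"
  proof (rule inj_onI)
    fix r s assume r: "r \<in> {..<p}" and s: "s \<in> {..<p}" and eq: "(2 * r) mod p = (2 * s) mod p"
    have "int ((2 * r) mod p) = int ((2 * s) mod p)" using eq by simp
    then have "(2 * int r) mod int p = (2 * int s) mod int p" by (simp add: zmod_int)
    then have "int p dvd 2 * int r - 2 * int s" by (simp add: mod_eq_dvd_iff)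
    then have "int p dvd 2 * (int r - int s)" by (simp add: algebra_simps)
    moreover have "coprime (int p) 2" using cop by (simp add: coprime_commute)
    ultimately have d: "int p dvd (int r - int s)" using coprime_dvd_mult_right_iff by blast
    show "r = s"
    proof (rule ccontr)
      assume "r \<noteq> s"
      then have "int r - int s \<noteq> 0" by simp
      then have "\<bar>int p\<bar> \<le> \<bar>int r - int s\<bar>" using d dvd_imp_le_int by blast
      then show False using r s by auto
    qed
  qed
  have img: "(\<lambda>r. (2 * r) mod p) ` {..<p} = {..<p}"
    using inj p0 by (intro endo_inj_surj) auto
  have "(\<Sum>k<p. sin (pi * real k / real p)) = (\<Sum>r<p. sin (pi * real ((2 * r) mod p) / real p))"
    using sum.reindex[OF inj, of "\<lambda>k. sin (pi * real k / real p)"] img by simp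
  then show ?thesis by (simp add: abs_sin_reindex)
qed




lemma sum_cube_pow:
  "(\<Sum>x\<in>cube m. f (hamming_weight m x)) = (\<Sum>A\<in>Pow {0..<m}. f (card A))"
proof (rule sum.reindex_bij_witness[where j = "\<lambda>x. {i\<in>{0..<m}. x i = 1}"
      and i = "\<lambda>A. (\<lambda>i. if i \<in> {0..<m} then (if i \<in> A then 1 else 0) else undefined)"])
  fix x assume x: "x \<in> cube m"
  show "(\<lambda>i. if i \<in> {0..<m} then (if i \<in> {i\<in>{0..<m}. x i = 1} then 1 else 0) else undefined) = x"
  proof
    fix i show "(if i \<in> {0..<m} then (if i \<in> {i\<in>{0..<m}. x i = 1} then 1 else 0) else undefined) = x i"
      using x unfolding cube_def by (cases "i < m") (auto simp: PiE_def extensional_def Pi_def)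
  qed
  show "{i\<in>{0..<m}. x i = 1} \<in> Pow {0..<m}" by auto
  show "f (card {i\<in>{0..<m}. x i = 1}) = f (hamming_weight m x)" by (simp add: hamming_weight_def)
next
  fix A assume A: "A \<in> Pow {0..<m}"
  show "{i\<in>{0..<m}. (if i \<in> {0..<m} then (if i \<in> A then 1 else 0) else undefined) = (1::nat)} = A"
  proof (intro set_eqI iffI)
    fix i assume "i \<in> {i\<in>{0..<m}. (if i \<in> {0..<m} then (if i \<in> A then 1 else 0) else undefined) = (1::nat)}"
    then show "i \<in> A" by (cases "i \<in> A") auto
  next
    fix i assume "i \<in> A" then show "i \<in> {i\<in>{0..<m}. (if i \<in> {0..<m} then (if i \<in> A then 1 else 0) else undefined) = (1::nat)}"
      using A by auto
  qed
  show "(\<lambda>i. if i \<in> {0..<m} then (if i \<in> A then 1 else 0) else undefined) \<in> cube m"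
    unfolding cube_def by (rule PiE_I) auto
qed

lemma sum_pow_card:
  fixes f :: "nat \<Rightarrow> real"
  assumes "finite S"
  shows "(\<Sum>A\<in>Pow S. f (card A)) = (\<Sum>k\<le>card S. real (card S choose k) * f k)"
proof -
  have "(\<Sum>A\<in>Pow S. f (card A)) = (\<Sum>k\<le>card S. \<Sum>A\<in>{A. A \<in> Pow S \<and> card A = k}. f (card A))"
    using assms by (intro sum.group[symmetric]) (auto intro: card_mono)
  also have "\<dots> = (\<Sum>k\<le>card S. real (card S choose k) * f k)"
  proof (rule sum.cong[OF refl])
    fix k assume "k \<in> {..card S}"
    have "(\<Sum>A\<in>{A. A \<in> Pow S \<and> card A = k}. f (card A)) = (\<Sum>A\<in>{A. A \<subseteq> S \<and> card A = k}. f k)"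
      by (intro sum.cong) auto
    also have "\<dots> = real (card {A. A \<subseteq> S \<and> card A = k}) * f k" by simp
    also have "\<dots> = real (card S choose k) * f k" using n_subsets[OF assms] by simp
    finally show "(\<Sum>A\<in>{A. A \<in> Pow S \<and> card A = k}. f (card A)) = real (card S choose k) * f k" .
  qed
  finally show ?thesis .
qed

lemma sum_cube:
  fixes f :: "nat \<Rightarrow> real"
  shows "(\<Sum>x\<in>cube m. f (hamming_weight m x)) = (\<Sum>k\<le>m. real (m choose k) * f k)"
  using sum_cube_pow[where m=m and f=f] sum_pow_card[of "{0..<m}" f] by simp

lemma card_cube: "card (cube m) = 2 ^ m"
  unfolding cube_def by (simp add: card_PiE numeral_2_eq_2)




definition om :: "nat \<Rightarrow> complex" where "om p = cis (2 * pi / real p)"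

lemma om_pow: "om p ^ t = cis (real t * (2 * pi / real p))"
  unfolding om_def by (rule Complex.DeMoivre)

lemma om_p: "p > 0 \<Longrightarrow> om p ^ p = 1"
  by (simp add: om_pow)

lemma orth:
  assumes "p > 0"
  shows "(\<Sum>j<p. om p ^ (j * t)) = (if p dvd t then of_nat p else 0)"
proof (cases "p dvd t")
  case True
  then obtain c where t: "t = p * c" by blast
  have "om p ^ (j * t) = 1" for j
    unfolding t by (metis om_p[OF assms] power_mult power_one mult.commute mult.left_commute)
  then show ?thesis using True by simp
next
  case False
  have ne: "om p ^ t \<noteq> 1"
  proof
    assume "om p ^ t = 1"
    then have "cis (real t * (2 * pi / real p)) = 1" by (simp add: om_pow)
    then have "cos (real t * (2 * pi / real p)) = 1" by (metis cis.sel(1) one_complex.sel(1))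
    then have "\<exists>n::int. real t * (2 * pi / real p) = of_int n * 2 * pi"
      by (rule iffD1[OF cos_one_2pi_int])
    then obtain n :: int where n: "real t * (2 * pi / real p) = of_int n * 2 * pi" by blast
    then have "real t = of_int n * real p" using assms by (simp add: field_simps)
    then have "int t = n * int p" by (metis of_int_eq_iff of_int_mult of_int_of_nat_eq)
    then have "int p dvd int t" by simp
    then show False using False by simp
  qed
  have "(\<Sum>j<p. om p ^ (j * t)) = (\<Sum>j<p. (om p ^ t) ^ j)"
    by (intro sum.cong refl) (metis power_mult mult.commute)
  also have "\<dots> = ((om p ^ t) ^ p - 1) / (om p ^ t - 1)" by (rule geometric_sum[OF ne])
  also have "(om p ^ t) ^ p = 1"
    by (metis om_p[OF assms] power_mult power_one mult.commute)
  finally show ?thesis using False by simp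
qed

lemma dvd_cond:
  assumes "r < (p::nat)"
  shows "p dvd (k + (p - 1) * r) \<longleftrightarrow> k mod p = r"
proof -
  have p: "p > 0" using assms by simp
  have e: "k + (p - 1) * r + r = k + p * r" using p by (cases p) (auto simp: algebra_simps)
  have "p dvd (k + (p - 1) * r) \<longleftrightarrow> (k + (p - 1) * r + r) mod p = r mod p"
    using mod_eq_dvd_iff_nat[of r "k + (p - 1) * r + r" p] by simp
  also have "\<dots> \<longleftrightarrow> k mod p = r" unfolding e using assms by simp
  finally show ?thesis .
qed

lemma fourier_point:
  fixes h :: "nat \<Rightarrow> real"
  assumes p: "p > 0" and per: "\<And>k. h k = h (k mod p)"
  shows "complex_of_real (h k) = (1 / of_nat p) *
     (\<Sum>j<p. (\<Sum>r<p. complex_of_real (h r) * om p ^ (j * ((p - 1) * r))) * (om p ^ j) ^ k)"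
proof -
  have "(\<Sum>j<p. (\<Sum>r<p. complex_of_real (h r) * om p ^ (j * ((p - 1) * r))) * (om p ^ j) ^ k)
      = (\<Sum>j<p. \<Sum>r<p. complex_of_real (h r) * om p ^ (j * (k + (p - 1) * r)))"
  proof (intro sum.cong refl)
    fix j assume "j \<in> {..<p}"
    have e: "om p ^ (j * ((p - 1) * r)) * (om p ^ j) ^ k = om p ^ (j * (k + (p - 1) * r))" for r
      by (simp only: power_mult[symmetric] power_add[symmetric] distrib_left add.commute)
    show "(\<Sum>r<p. complex_of_real (h r) * om p ^ (j * ((p - 1) * r))) * (om p ^ j) ^ k
      = (\<Sum>r<p. complex_of_real (h r) * om p ^ (j * (k + (p - 1) * r)))"
      unfolding sum_distrib_right by (intro sum.cong refl) (simp only: mult.assoc e)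
  qed
  also have "\<dots> = (\<Sum>r<p. complex_of_real (h r) * (\<Sum>j<p. om p ^ (j * (k + (p - 1) * r))))"
    by (subst sum.swap) (simp add: sum_distrib_left)
  also have "\<dots> = (\<Sum>r<p. complex_of_real (h r) * (if k mod p = r then of_nat p else 0))"
  proof (intro sum.cong refl)
    fix r assume "r \<in> {..<p}"
    then have "p dvd (k + (p - 1) * r) \<longleftrightarrow> k mod p = r" by (intro dvd_cond) simp
    then show "complex_of_real (h r) * (\<Sum>j<p. om p ^ (j * (k + (p - 1) * r))) =
       complex_of_real (h r) * (if k mod p = r then of_nat p else 0)"
      unfolding orth[OF p] by simp
  qed
  also have "\<dots> = complex_of_real (h (k mod p)) * of_nat p"
  proof -
    have "(\<Sum>r<p. complex_of_real (h r) * (if k mod p = r then of_nat p else 0))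
       = (\<Sum>r\<in>{..<p}. if r = k mod p then complex_of_real (h r) * of_nat p else 0)"
      by (intro sum.cong) auto
    also have "\<dots> = complex_of_real (h (k mod p)) * of_nat p"
      using p by (subst sum.delta) auto
    finally show ?thesis .
  qed
  finally show ?thesis using p per[of k] by simp
qed

lemma fourier_binom:
  fixes h :: "nat \<Rightarrow> real"
  assumes p: "p > 0" and per: "\<And>k. h k = h (k mod p)"
  shows "complex_of_real (\<Sum>k\<le>m. real (m choose k) * h k) = (1 / of_nat p) *
     (\<Sum>j<p. (\<Sum>r<p. complex_of_real (h r) * om p ^ (j * ((p - 1) * r))) * (1 + om p ^ j) ^ m)"
proof -
  define c where "c j = (\<Sum>r<p. complex_of_real (h r) * om p ^ (j * ((p - 1) * r)))" for j
  have "complex_of_real (\<Sum>k\<le>m. real (m choose k) * h k) = (\<Sum>k\<le>m. of_nat (m choose k) * complex_of_real (h k))"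
    by simp
  also have "\<dots> = (\<Sum>k\<le>m. of_nat (m choose k) * ((1 / of_nat p) * (\<Sum>j<p. c j * (om p ^ j) ^ k)))"
  proof -
    have fp: "complex_of_real (h k) = (1 / of_nat p) * (\<Sum>j<p. c j * (om p ^ j) ^ k)" for k
      unfolding c_def by (rule fourier_point[where p=p and h=h, OF p per])
    show ?thesis by (simp only: fp)
  qed
  also have "\<dots> = (1 / of_nat p) * (\<Sum>j<p. c j * (\<Sum>k\<le>m. of_nat (m choose k) * (om p ^ j) ^ k * 1 ^ (m - k)))"
  proof -
    have "(\<Sum>k\<le>m. of_nat (m choose k) * ((1 / of_nat p) * (\<Sum>j<p. c j * (om p ^ j) ^ k)))
       = (1 / of_nat p) * (\<Sum>k\<le>m. \<Sum>j<p. c j * (of_nat (m choose k) * (om p ^ j) ^ k * 1 ^ (m - k)))"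
      by (simp add: sum_distrib_left mult_ac)
    also have "\<dots> = (1 / of_nat p) * (\<Sum>j<p. \<Sum>k\<le>m. c j * (of_nat (m choose k) * (om p ^ j) ^ k * 1 ^ (m - k)))"
      by (subst sum.swap) (rule refl)
    also have "\<dots> = (1 / of_nat p) * (\<Sum>j<p. c j * (\<Sum>k\<le>m. of_nat (m choose k) * (om p ^ j) ^ k * 1 ^ (m - k)))"
      by (simp only: sum_distrib_left)
    finally show ?thesis .
  qed
  also have "\<dots> = (1 / of_nat p) * (\<Sum>j<p. c j * (om p ^ j + 1) ^ m)"
    by (simp only: binomial_ring)
  finally show ?thesis by (simp add: c_def add.commute)
qed




lemma cmod_1_cis: "cmod (1 + cis t) = 2 * \<bar>cos (t/2)\<bar>"
proof -
  have "(cmod (1 + cis t))^2 = (1 + cos t)^2 + (sin t)^2" by (simp add: cmod_power2)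
  also have "\<dots> = 2 + 2 * cos t" using sin_cos_squared_add[of t] by (simp add: power2_eq_square algebra_simps)
  also have "\<dots> = (2 * \<bar>cos (t/2)\<bar>)^2" using cos_double_cos[of "t/2"] by (simp add: power_mult_distrib)
  finally show ?thesis by (metis abs_of_nonneg norm_ge_zero real_sqrt_abs real_sqrt_unique abs_ge_zero
     mult_nonneg_nonneg zero_le_numeral)
qed

lemma cmod_1_om:
  assumes "1 \<le> j" "j < p"
  shows "cmod (1 + om p ^ j) \<le> 2 * cos (pi / real p)"
proof -
  have p: "real p > 0" using assms by simp
  have eq: "real j * (2 * pi / real p) / 2 = pi * real j / real p" by simp
  have c1: "cos (pi * real j / real p) \<le> cos (pi / real p)"
    using assms p by (intro cos_monotone_0_pi_le) (auto simp: field_simps)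
  have c2: "- cos (pi * real j / real p) \<le> cos (pi / real p)"
  proof -
    have "- cos (pi * real j / real p) = cos (pi - pi * real j / real p)" by simp
    also have "\<dots> \<le> cos (pi / real p)"
    proof (intro cos_monotone_0_pi_le)
      have "real j + 1 \<le> real p" using assms by simp
      then have "pi * (real j + 1) \<le> pi * real p" by (intro mult_left_mono) auto
      then show "pi / real p \<le> pi - pi * real j / real p" using p by (simp add: field_simps)
      show "pi - pi * real j / real p \<le> pi" using p by simp
    qed (use p in auto)
    finally show ?thesis .
  qed
  show ?thesis unfolding om_pow cmod_1_cis eq using c1 c2 by simp
qed

lemma sin_ge_half: "0 \<le> y \<Longrightarrow> y \<le> 1 \<Longrightarrow> y / 2 \<le> sin (y::real)"
proof -
  assume y: "0 \<le> y" "y \<le> 1"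
  have "\<bar>sin y - (\<Sum>m<3. sin_coeff m * y ^ m)\<bar> \<le> inverse (fact 3) * \<bar>y\<bar> ^ 3"
    by (rule Maclaurin_sin_bound)
  moreover have "(\<Sum>m<3. sin_coeff m * y ^ m) = y"
    by (simp add: numeral_3_eq_3 sin_coeff_def)
  moreover have "inverse (fact 3) * \<bar>y\<bar> ^ 3 \<le> y / 2"
  proof -
    have a: "y * y \<le> 1" using y mult_le_one by blast
    have "y * y * y \<le> 1 * y" using mult_right_mono[OF a y(1)] .
    then have "y ^ 3 \<le> y" by (simp add: power3_eq_cube)
    then show ?thesis using y by (simp add: fact_numeral)
  qed
  ultimately show ?thesis by linarith
qed

lemma cos_pi_p_bound:
  assumes "p \<ge> 3"
  shows "0 \<le> cos (pi / real p)" "cos (pi / real p) \<le> exp (- 1 / (real p)^2)"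
proof -
  have p: "real p \<ge> 3" using assms by simp
  have a: "pi / real p \<le> pi / 2" using p by (intro divide_left_mono) auto
  have b: "0 \<le> pi / real p" using p by simp
  show "0 \<le> cos (pi / real p)"
  proof (rule cos_ge_zero)
    show "- (pi / 2) \<le> pi / real p" using b pi_gt_zero by linarith
  qed (use a in auto)
  define y where "y = pi / (2 * real p)"
  have y0: "0 \<le> y" and y1: "y \<le> 1" using p pi_less_4 by (auto simp: y_def field_simps)
  have s: "y / 2 \<le> sin y" by (rule sin_ge_half[OF y0 y1])
  have "(y/2)^2 \<le> (sin y)^2" using s y0 by (intro power_mono) auto
  moreover have "cos (pi / real p) = 1 - 2 * (sin y)^2"
    using cos_double_sin[of y] by (simp add: y_def)
  moreover have "1 / (real p)^2 \<le> 2 * (y/2)^2"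
  proof -
    have "2 * (y/2)^2 = pi^2 / (8 * (real p)^2)" by (simp add: y_def power_divide power_mult_distrib)
    moreover have "pi^2 \<ge> 8" using power_mono[of 3 pi 2] pi_gt3 by simp
    ultimately show ?thesis using p by (simp add: field_simps)
  qed
  ultimately have "cos (pi / real p) \<le> 1 + (- 1 / (real p)^2)" by linarith
  also have "\<dots> \<le> exp (- 1 / (real p)^2)" by (rule exp_ge_add_one_self)
  finally show "cos (pi / real p) \<le> exp (- 1 / (real p)^2)" .
qed




lemma norm_om: "cmod (om p) = 1" by (simp add: om_def)

lemma binom_bound:
  fixes h :: "nat \<Rightarrow> real"
  assumes p: "p > 0" and per: "\<And>k. h k = h (k mod p)"
    and h0: "\<And>k. 0 \<le> h k" and h1: "\<And>k. h k \<le> 1"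
    and cb: "\<And>j. 1 \<le> j \<Longrightarrow> j < p \<Longrightarrow> cmod (1 + om p ^ j) \<le> B" and B0: "0 \<le> B"
  shows "(\<Sum>k\<le>m. real (m choose k) * h k) \<le> 2^m * (\<Sum>r<p. h r) / real p + real p * B^m"
proof -
  define T where "T = (\<Sum>k\<le>m. real (m choose k) * h k)"
  define c where "c j = (\<Sum>r<p. complex_of_real (h r) * om p ^ (j * ((p - 1) * r)))" for j
  have F: "complex_of_real T = (1 / of_nat p) * (\<Sum>j<p. c j * (1 + om p ^ j) ^ m)"
    unfolding T_def c_def by (rule fourier_binom[where p=p and h=h, OF p per])
  have split: "{..<p} = insert 0 {1..<p}" using p by auto
  have c0: "c 0 = complex_of_real (\<Sum>r<p. h r)" by (simp add: c_def)
  have "(\<Sum>j<p. c j * (1 + om p ^ j) ^ m) = c 0 * 2^m + (\<Sum>j\<in>{1..<p}. c j * (1 + om p ^ j) ^ m)"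
    unfolding split by (subst sum.insert) auto
  then have "complex_of_real T = complex_of_real (2^m * (\<Sum>r<p. h r) / real p)
      + (1 / of_nat p) * (\<Sum>j\<in>{1..<p}. c j * (1 + om p ^ j) ^ m)"
    unfolding F c0 by (simp add: algebra_simps)
  then have R: "complex_of_real (T - 2^m * (\<Sum>r<p. h r) / real p)
      = (1 / of_nat p) * (\<Sum>j\<in>{1..<p}. c j * (1 + om p ^ j) ^ m)" by simp
  have cj: "cmod (c j) \<le> real p" for j
  proof -
    have "cmod (c j) \<le> (\<Sum>r<p. cmod (complex_of_real (h r) * om p ^ (j * ((p - 1) * r))))"
      unfolding c_def by (rule norm_sum)
    also have "\<dots> = (\<Sum>r<p. h r)" using h0 by (simp add: norm_mult norm_power norm_om)
    also have "\<dots> \<le> (\<Sum>r<p. 1)" using h1 by (intro sum_mono) auto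
    finally show ?thesis by simp
  qed
  have "T - 2^m * (\<Sum>r<p. h r) / real p \<le> cmod (complex_of_real (T - 2^m * (\<Sum>r<p. h r) / real p))"
    by (subst norm_of_real) (rule abs_ge_self)
  also have "\<dots> = (1 / real p) * cmod (\<Sum>j\<in>{1..<p}. c j * (1 + om p ^ j) ^ m)"
    unfolding R by (simp add: norm_mult norm_divide)
  also have "\<dots> \<le> (1 / real p) * (\<Sum>j\<in>{1..<p}. real p * B ^ m)"
  proof (intro mult_left_mono)
    have "cmod (\<Sum>j\<in>{1..<p}. c j * (1 + om p ^ j) ^ m) \<le> (\<Sum>j\<in>{1..<p}. cmod (c j * (1 + om p ^ j) ^ m))"
      by (rule norm_sum)
    also have "\<dots> \<le> (\<Sum>j\<in>{1..<p}. real p * B ^ m)"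
    proof (intro sum_mono)
      fix j assume j: "j \<in> {1..<p}"
      have "cmod (c j * (1 + om p ^ j) ^ m) = cmod (c j) * cmod (1 + om p ^ j) ^ m"
        by (simp add: norm_mult norm_power)
      also have "\<dots> \<le> real p * B ^ m"
        using j cj[of j] cb[of j] by (intro mult_mono power_mono) auto
      finally show "cmod (c j * (1 + om p ^ j) ^ m) \<le> real p * B ^ m" .
    qed
    finally show "cmod (\<Sum>j\<in>{1..<p}. c j * (1 + om p ^ j) ^ m) \<le> (\<Sum>j\<in>{1..<p}. real p * B ^ m)" .
  qed simp
  also have "\<dots> = real (p - 1) * B ^ m" using p by simp
  also have "\<dots> \<le> real p * B ^ m" using B0 by (intro mult_right_mono) auto
  finally show ?thesis unfolding T_def by simp
qed




lemma mean_bound: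
  assumes "prime p" "odd p"
  shows "(\<Sum>r<p. q_p p (int r)) / real p \<le> 1/2 - 1/pi + 1/(2 * real p)"
proof -
  have p2: "p \<ge> 2" using assms prime_ge_2_nat by blast
  have "(\<Sum>r<p. q_p p (int r)) = (\<Sum>r<p. (1 - \<bar>sin (2 * pi * real r / real p)\<bar>) / 2)"
    by (intro sum.cong refl) (simp add: q_formula)
  also have "\<dots> = real p / 2 - (\<Sum>r<p. \<bar>sin (2 * pi * real r / real p)\<bar>) / 2"
    by (simp add: sum_divide_distrib[symmetric] sum_subtractf)
  also have "\<dots> = real p / 2 - (\<Sum>k<p. sin (pi * real k / real p)) / 2"
    using sum_abs_sin[OF assms] by simp
  also have "\<dots> \<le> real p / 2 - (2 * real p / pi - 1) / 2"
    using sum_sin_lower[OF p2] by simp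
  finally have "(\<Sum>r<p. q_p p (int r)) \<le> real p / 2 - (2 * real p / pi - 1) / 2" .
  then have "(\<Sum>r<p. q_p p (int r)) / real p \<le> (real p / 2 - (2 * real p / pi - 1) / 2) / real p"
    using p2 by (intro divide_right_mono) auto
  also have "\<dots> = 1/2 - 1/pi + 1/(2 * real p)" using p2 by (simp add: field_simps)
  finally show ?thesis .
qed

theorem lemma4p3:
  shows "\<exists>C::real. \<forall>p n::nat. prime p \<and> odd p \<and> n \<ge> 2 \<longrightarrow>
     unif_cube_expectation (n - 1) (\<lambda>x. q_p p (int (hamming_weight (n - 1) x)))
       \<le> 1/2 - 1/pi + 1/(2 * real p) + C * real p powr (3/2) * exp (- real n / (real p)\<^sup>2)"
proof (intro exI[of _ 3] allI impI)
  fix p n :: nat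
  assume a: "prime p \<and> odd p \<and> n \<ge> 2"
  then have pr: "prime p" and od: "odd p" and n2: "n \<ge> 2" by auto
  have p2: "p \<ge> 2" using pr prime_ge_2_nat by blast
  have p3: "p \<ge> 3" using p2 od by (cases "p = 2") auto
  have p0: "p > 0" using p2 by simp
  define m where "m = n - 1"
  define h where "h k = q_p p (int k)" for k
  define cs where "cs = cos (pi / real p)"
  have cs0: "0 \<le> cs" and csb: "cs \<le> exp (- 1 / (real p)^2)"
    using cos_pi_p_bound[OF p3] by (auto simp: cs_def)
  have per: "h k = h (k mod p)" for k unfolding h_def by (rule q_periodic[OF p0])
  have E: "unif_cube_expectation m (\<lambda>x. q_p p (int (hamming_weight m x)))
      = (\<Sum>k\<le>m. real (m choose k) * h k) / 2^m"
    unfolding unif_cube_expectation_def card_cube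
    using sum_cube[of "\<lambda>k. q_p p (int k)" m] by (simp add: h_def)
  have T: "(\<Sum>k\<le>m. real (m choose k) * h k) \<le> 2^m * (\<Sum>r<p. h r) / real p + real p * (2 * cs)^m"
    by (rule binom_bound[where p=p and h=h, OF p0 per])
       (use cs0 in \<open>auto simp: h_def q_bounds cmod_1_om cs_def\<close>)
  have E2: "unif_cube_expectation m (\<lambda>x. q_p p (int (hamming_weight m x)))
      \<le> (\<Sum>r<p. h r) / real p + real p * cs^m"
  proof -
    have "(\<Sum>k\<le>m. real (m choose k) * h k) / 2^m \<le> (2^m * (\<Sum>r<p. h r) / real p + real p * (2 * cs)^m) / 2^m"
      using T by (intro divide_right_mono) auto
    also have "\<dots> = (\<Sum>r<p. h r) / real p + real p * cs^m"
      by (simp add: power_mult_distrib field_simps)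
    finally show ?thesis using E by simp
  qed
  have mean: "(\<Sum>r<p. h r) / real p \<le> 1/2 - 1/pi + 1/(2 * real p)"
    unfolding h_def by (rule mean_bound[OF pr od])
  have "cs^m \<le> exp (- 1 / (real p)^2) ^ m" using cs0 csb by (intro power_mono) auto
  also have "\<dots> = exp (real m * (- 1 / (real p)^2))" by (rule exp_of_nat_mult[symmetric])
  also have "real m * (- 1 / (real p)^2) = 1 / (real p)^2 + (- real n / (real p)^2)"
    using n2 p0 by (simp add: m_def of_nat_diff add_divide_distrib[symmetric] diff_divide_distrib)
  also have "exp (1 / (real p)^2 + (- real n / (real p)^2)) = exp (1 / (real p)^2) * exp (- real n / (real p)^2)"
    by (rule exp_add)
  also have "\<dots> \<le> 3 * exp (- real n / (real p)^2)"
  proof (intro mult_right_mono)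
    have "1 / (real p)^2 \<le> 1" using p3 by (simp add: field_simps)
    then have "exp (1 / (real p)^2) \<le> exp 1" by simp
    then show "exp (1 / (real p)^2) \<le> 3" using exp_le by linarith
  qed simp
  finally have cm: "cs^m \<le> 3 * exp (- real n / (real p)^2)" .
  have pp: "real p \<le> real p powr (3/2)"
  proof -
    have "real p = real p powr 1" using p0 by simp
    also have "\<dots> \<le> real p powr (3/2)" using p2 by (intro powr_mono) auto
    finally show ?thesis .
  qed
  have "real p * cs^m \<le> real p * (3 * exp (- real n / (real p)^2))"
    using cm by (intro mult_left_mono) auto
  also have "\<dots> \<le> real p powr (3/2) * (3 * exp (- real n / (real p)^2))"
    using pp by (intro mult_right_mono) auto
  finally have err: "real p * cs^m \<le> 3 * real p powr (3/2) * exp (- real n / (real p)^2)" by simp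
  show "unif_cube_expectation (n - 1) (\<lambda>x. q_p p (int (hamming_weight (n - 1) x)))
       \<le> 1/2 - 1/pi + 1/(2 * real p) + 3 * real p powr (3/2) * exp (- real n / (real p)\<^sup>2)"
    using E2 mean err unfolding m_def by linarith
qed


end
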